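(* Fix an integer $k\geq 3$. Let $\mathcal{A}$ be any deterministic LOCAL algorithm which, on every $k$-partially $k$-colorable graph (with any valid assignment of identifiers), outputs a $k$-partial $k$-coloring. For $n\ge 1$ let $T_{\mathcal{A}}(n)$ denote the maximum, over all $n$-vertex $k$-partially $k$-colorable graphs $G$ and all valid identifier assignments, of the number of rounds $\mathcal{A}$ uses on $G$. Then $T_{\mathcal{A}}(n)$ is not $o(n/k^3)$; that is, $T_{\mathcal{A}}(n)=\Omega(n/k^3)$ (for infinitely many $n$, with the implied constant independent of $n$), which for constant $k$ is $\Omega(n)$.
   Context: All graphs are finite, simple and undirected; $\deg_G(v)$ denotes the degree of $v$. For integers $k\geq 0$, $c\geq 1$, a $k$-partial $c$-coloring of $G=(V,E)$ is a map $\gamma:V\to\{1,\dots,c\}$ such that every vertex $v$ has at least $\min\{k,\deg_G(v)\}$ neighbors $u$ with $\gamma(u)\neq\gamma(v)$; $G$ is $k$-partially $c$-colorable if such a map exists. LOCAL model: the input graph $G$ on $n$ vertices is the communication network; each vertex has a distinct identifier from $\{1,\dots,n^d\}$ for a fixed constant $d\geq 1$ (a valid identifier assignment), initially knows only its identifier and the identifier range, and computation proceeds in synchronous rounds in which every vertex may send an arbitrarily large message to each neighbor, receive its neighbors' messages, and perform arbitrary local computation; after some number of rounds each vertex outputs (here, its color) and terminates. The complexity is the number of rounds. Equivalently, the output of a vertex after $t$ rounds is a function of its $t$-radius view: the subgraph of $G$ induced by the vertices at distance at most $t$ from it, together with their identifiers. *)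

theory Defs
  imports Main "HOL-Library.Landau_Symbols"
begin

text \<open>Finite simple undirected graphs: vertex set V (natural numbers used as vertex
names; any finite graph is isomorphic to one of these), edges are 2-element subsets of V.\<close>

definition simple_graph :: "nat set \<Rightarrow> nat set set \<Rightarrow> bool" where
  "simple_graph V E \<longleftrightarrow> finite V \<and>
     E \<subseteq> {e. \<exists>u v. e = {u, v} \<and> u \<noteq> v \<and> u \<in> V \<and> v \<in> V}"

definition nbrs :: "nat set set \<Rightarrow> nat \<Rightarrow> nat set" where
  "nbrs E v = {u. {u, v} \<in> E}"

definition deg :: "nat set set \<Rightarrow> nat \<Rightarrow> nat" where
  "deg E v = card (nbrs E v)"

definition partial_coloring :: "nat \<Rightarrow> nat \<Rightarrow> nat set \<Rightarrow> nat set set \<Rightarrow> (nat \<Rightarrow> nat) \<Rightarrow> bool" where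
  "partial_coloring k c V E \<gamma> \<longleftrightarrow>
     (\<forall>v\<in>V. \<gamma> v \<in> {1..c}) \<and>
     (\<forall>v\<in>V. card {u \<in> nbrs E v. \<gamma> u \<noteq> \<gamma> v} \<ge> min k (deg E v))"

definition partially_colorable :: "nat \<Rightarrow> nat \<Rightarrow> nat set \<Rightarrow> nat set set \<Rightarrow> bool" where
  "partially_colorable k c V E \<longleftrightarrow> (\<exists>\<gamma>. partial_coloring k c V E \<gamma>)"

fun ball :: "nat set set \<Rightarrow> nat \<Rightarrow> nat \<Rightarrow> nat set" where
  "ball E v 0 = {v}"
| "ball E v (Suc t) = ball E v t \<union> {u. \<exists>w\<in>ball E v t. {w, u} \<in> E}"

definition valid_ids :: "nat \<Rightarrow> nat \<Rightarrow> nat set \<Rightarrow> (nat \<Rightarrow> nat) \<Rightarrow> bool" where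
  "valid_ids n d V idf \<longleftrightarrow> inj_on idf V \<and> idf ` V \<subseteq> {1..n ^ d}"

type_synonym view = "nat \<times> nat set \<times> nat set set"

definition view :: "nat set set \<Rightarrow> (nat \<Rightarrow> nat) \<Rightarrow> nat \<Rightarrow> nat \<Rightarrow> view" where
  "view E idf t v = (idf v, idf ` ball E v t, {idf ` e | e. e \<in> E \<and> e \<subseteq> ball E v t})"

text \<open>A deterministic LOCAL algorithm is a map A n t W: given the number of vertices n
(equivalently the identifier range {1..n^d}), the current round t and the t-radius view W,
it either continues (None) or outputs color c and terminates (Some c).\<close>

type_synonym algorithm = "nat \<Rightarrow> nat \<Rightarrow> view \<Rightarrow> nat option"

definition halt_time :: "algorithm \<Rightarrow> nat \<Rightarrow> nat set set \<Rightarrow> (nat \<Rightarrow> nat) \<Rightarrow> nat \<Rightarrow> nat" where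
  "halt_time A n E idf v = (LEAST t. A n t (view E idf t v) \<noteq> None)"

definition alg_output :: "algorithm \<Rightarrow> nat \<Rightarrow> nat set set \<Rightarrow> (nat \<Rightarrow> nat) \<Rightarrow> nat \<Rightarrow> nat" where
  "alg_output A n E idf v =
     the (A n (halt_time A n E idf v) (view E idf (halt_time A n E idf v) v))"

definition rounds :: "algorithm \<Rightarrow> nat set \<Rightarrow> nat set set \<Rightarrow> (nat \<Rightarrow> nat) \<Rightarrow> nat" where
  "rounds A V E idf = Max (halt_time A (card V) E idf ` V)"

definition solves :: "nat \<Rightarrow> nat \<Rightarrow> algorithm \<Rightarrow> bool" where
  "solves d k A \<longleftrightarrow>
     (\<forall>V E idf. simple_graph V E \<and> valid_ids (card V) d V idf \<and> partially_colorable k k V E \<longrightarrow>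
        (\<forall>v\<in>V. \<exists>t. A (card V) t (view E idf t v) \<noteq> None) \<and>
        partial_coloring k k V E (alg_output A (card V) E idf))"

definition T :: "nat \<Rightarrow> nat \<Rightarrow> algorithm \<Rightarrow> nat \<Rightarrow> nat" where
  "T d k A n = Sup {rounds A V E idf | V E idf.
      simple_graph V E \<and> card V = n \<and> valid_ids n d V idf \<and> partially_colorable k k V E}"

end

theory Submission
  imports Defs
begin


lemma ball_mono_Suc: "ball E v t \<subseteq> ball E v (Suc t)" by auto

lemma ball_mono: "s \<le> t \<Longrightarrow> ball E v s \<subseteq> ball E v t"
proof (induction t)
  case 0 then show ?case by simp
next
  case (Suc t) then show ?case using ball_mono_Suc[of E v t] by (cases "s = Suc t") auto
qed

lemma ball_subset_V:
  assumes "simple_graph V E" "v \<in> V" shows "ball E v t \<subseteq> V"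
proof (induction t)
  case 0 then show ?case using assms by simp
next
  case (Suc t)
  have "{u. \<exists>w\<in>ball E v t. {w, u} \<in> E} \<subseteq> V"
  proof
    fix u assume "u \<in> {u. \<exists>w\<in>ball E v t. {w, u} \<in> E}"
    then obtain w where "{w,u} \<in> E" by auto
    then show "u \<in> V" using assms(1) unfolding simple_graph_def by (auto simp: doubleton_eq_iff)
  qed
  then show ?case using Suc by simp
qed

lemma ball_relabel:
  assumes "simple_graph V E" "inj_on f V" "v \<in> V"
  shows "ball ((`) f ` E) (f v) t = f ` ball E v t"
proof (induction t)
  case 0 then show ?case by simp
next
  case (Suc t)
  have B: "ball E v t \<subseteq> V" by (rule ball_subset_V[OF assms(1,3)])
  have "{u'. \<exists>w'\<in>ball ((`) f ` E) (f v) t. {w', u'} \<in> (`) f ` E}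
        = f ` {u. \<exists>w\<in>ball E v t. {w, u} \<in> E}"
  proof (rule set_eqI, rule iffI)
    fix u' assume "u' \<in> {u'. \<exists>w'\<in>ball ((`) f ` E) (f v) t. {w', u'} \<in> (`) f ` E}"
    then obtain w e where w: "w \<in> ball E v t" and e: "e \<in> E" and eq: "{f w, u'} = f ` e"
      using Suc by auto
    from e assms(1) obtain a b where ab: "e = {a,b}" "a \<in> V" "b \<in> V" "a \<noteq> b"
      unfolding simple_graph_def by blast
    have wV: "w \<in> V" using w B by auto
    from eq ab have "(f w = f a \<and> u' = f b) \<or> (f w = f b \<and> u' = f a)"
      by (auto simp: doubleton_eq_iff)
    then show "u' \<in> f ` {u. \<exists>w\<in>ball E v t. {w, u} \<in> E}"
    proof
      assume h: "f w = f a \<and> u' = f b"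
      then have "w = a" using inj_onD[OF assms(2)] wV ab by blast
      then show ?thesis using h w e ab by blast
    next
      assume h: "f w = f b \<and> u' = f a"
      then have "w = b" using inj_onD[OF assms(2)] wV ab by blast
      then have "{w, a} \<in> E" using e ab by (simp add: insert_commute)
      then show ?thesis using h w by blast
    qed
  next
    fix u' assume "u' \<in> f ` {u. \<exists>w\<in>ball E v t. {w, u} \<in> E}"
    then obtain u w where "u' = f u" "w \<in> ball E v t" "{w,u} \<in> E" by auto
    then show "u' \<in> {u'. \<exists>w'\<in>ball ((`) f ` E) (f v) t. {w', u'} \<in> (`) f ` E}"
    proof -
      have "f w \<in> ball ((`) f ` E) (f v) t" using Suc \<open>w \<in> ball E v t\<close> by simp
      moreover have "{f w, f u} \<in> (`) f ` E" using \<open>{w,u} \<in> E\<close> by (auto intro!: image_eqI[of _ _ "{w,u}"])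
      ultimately show ?thesis using \<open>u' = f u\<close> by blast
    qed
  qed
  then show ?case using Suc by (simp add: image_Un)
qed

lemma view_relabel:
  assumes "simple_graph V E" "inj_on f V" "v \<in> V"
  shows "view E f t v = view ((`) f ` E) id t (f v)"
proof -
  have B: "ball E v t \<subseteq> V" by (rule ball_subset_V[OF assms(1,3)])
  have EV: "\<And>e. e \<in> E \<Longrightarrow> e \<subseteq> V" using assms(1) unfolding simple_graph_def by blast
  have "{f ` e |e. e \<in> E \<and> e \<subseteq> ball E v t} = {e'. e' \<in> (`) f ` E \<and> e' \<subseteq> f ` ball E v t}"
  proof (rule set_eqI, rule iffI)
    fix x assume "x \<in> {f ` e |e. e \<in> E \<and> e \<subseteq> ball E v t}"
    then show "x \<in> {e'. e' \<in> (`) f ` E \<and> e' \<subseteq> f ` ball E v t}" by auto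
  next
    fix x assume "x \<in> {e'. e' \<in> (`) f ` E \<and> e' \<subseteq> f ` ball E v t}"
    then obtain e where e: "e \<in> E" "x = f ` e" "f ` e \<subseteq> f ` ball E v t" by auto
    have "e \<subseteq> ball E v t"
    proof
      fix a assume a: "a \<in> e"
      then have "f a \<in> f ` ball E v t" using e(3) by auto
      then show "a \<in> ball E v t" using inj_on_image_mem_iff[OF assms(2) _ B] a EV[OF e(1)] by blast
    qed
    then show "x \<in> {f ` e |e. e \<in> E \<and> e \<subseteq> ball E v t}" using e by auto
  qed
  then show ?thesis unfolding view_def using ball_relabel[OF assms] by simp
qed

lemma rounds_relabel:
  assumes "simple_graph V E" "inj_on f V"
  shows "rounds A V E f = rounds A (f ` V) ((`) f ` E) id"
proof -
  have "halt_time A (card V) E f v = halt_time A (card V) ((`) f ` E) id (f v)" if "v \<in> V" for v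
    unfolding halt_time_def using view_relabel[OF assms that] by simp
  then have "halt_time A (card V) E f ` V = halt_time A (card V) ((`) f ` E) id ` f ` V"
    by (auto simp: image_image)
  then show ?thesis unfolding rounds_def using card_image[OF assms(2)] by simp
qed

lemma T_set_finite:
  "finite {rounds A V E idf | V E idf.
      simple_graph V E \<and> card V = n \<and> valid_ids n d V idf \<and> partially_colorable k k V E}"
  (is "finite ?X")
proof -
  let ?N = "{1..n^d}"
  have "?X \<subseteq> (\<lambda>(W,F). rounds A W F id) ` (Pow ?N \<times> Pow (Pow ?N))"
  proof
    fix x assume "x \<in> ?X"
    then obtain V E idf where h: "x = rounds A V E idf" "simple_graph V E" "valid_ids n d V idf"
      by blast
    have inj: "inj_on idf V" and im: "idf ` V \<subseteq> ?N" using h(3) unfolding valid_ids_def by auto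
    have EV: "\<And>e. e \<in> E \<Longrightarrow> e \<subseteq> V" using h(2) unfolding simple_graph_def by blast
    have "(`) idf ` E \<subseteq> Pow ?N" using EV im by blast
    then show "x \<in> (\<lambda>(W,F). rounds A W F id) ` (Pow ?N \<times> Pow (Pow ?N))"
      using rounds_relabel[OF h(2) inj] h(1) im by (auto intro!: image_eqI[of _ _ "(idf ` V, (`) idf ` E)"])
  qed
  then show ?thesis by (rule finite_subset) auto
qed

lemma T_ge:
  assumes "simple_graph V E" "card V = n" "valid_ids n d V idf" "partially_colorable k k V E"
  shows "rounds A V E idf \<le> T d k A n"
  unfolding T_def
  by (rule le_cSup_finite[OF T_set_finite]) (use assms in blast)



lemma ball_agree:
  assumes agree: "\<And>u w. u \<in> R \<Longrightarrow> ({u,w} \<in> E1 \<longleftrightarrow> {u,w} \<in> E2)"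
    and sub: "ball E1 v t \<subseteq> R" and "s \<le> t"
  shows "ball E1 v s = ball E2 v s"
  using \<open>s \<le> t\<close>
proof (induction s)
  case 0 then show ?case by simp
next
  case (Suc s)
  then have eq: "ball E1 v s = ball E2 v s" by simp
  have R: "ball E1 v s \<subseteq> R" using ball_mono[of s t E1 v] Suc.prems sub by auto
  have "{u. \<exists>w\<in>ball E1 v s. {w, u} \<in> E1} = {u. \<exists>w\<in>ball E2 v s. {w, u} \<in> E2}"
  proof -
    have "\<And>u w. w \<in> ball E1 v s \<Longrightarrow> ({w, u} \<in> E1 \<longleftrightarrow> {w, u} \<in> E2)" using R agree by auto
    then show ?thesis using eq by auto
  qed
  then show ?case using eq by simp
qed

lemma view_agree:
  assumes agree: "\<And>u w. u \<in> R \<Longrightarrow> ({u,w} \<in> E1 \<longleftrightarrow> {u,w} \<in> E2)"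
    and sub: "ball E1 v t \<subseteq> R" and "s \<le> t"
    and d1: "\<And>e. e \<in> E1 \<Longrightarrow> \<exists>a b. e = {a,b}"
    and d2: "\<And>e. e \<in> E2 \<Longrightarrow> \<exists>a b. e = {a,b}"
  shows "view E1 idf s v = view E2 idf s v"
proof -
  have eq: "ball E1 v s = ball E2 v s" by (rule ball_agree[OF agree sub \<open>s \<le> t\<close>])
  have R: "ball E1 v s \<subseteq> R" using ball_mono[of s t E1 v] assms(3) sub by auto
  have "e \<in> E1 \<longleftrightarrow> e \<in> E2" if a1: "e \<subseteq> ball E1 v s" and a2: "e \<in> E1 \<or> e \<in> E2" for e
  proof -
    obtain a b where "e = {a,b}" using a2 d1 d2 by blast
    then have "a \<in> R" using a1 R by auto
    then show ?thesis using agree \<open>e = {a,b}\<close> by blast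
  qed
  then have "{e. e \<in> E1 \<and> e \<subseteq> ball E1 v s} = {e. e \<in> E2 \<and> e \<subseteq> ball E2 v s}"
    using eq by auto
  then have "{idf ` e |e. e \<in> E1 \<and> e \<subseteq> ball E1 v s} = {idf ` e |e. e \<in> E2 \<and> e \<subseteq> ball E2 v s}"
    by (simp add: setcompr_eq_image)
  then show ?thesis unfolding view_def using eq by simp
qed

lemma halt_agree:
  assumes views: "\<And>s. s \<le> t \<Longrightarrow> view E1 idf s v = view E2 idf s v"
    and ht: "halt_time A n E1 idf v \<le> t"
    and ex: "\<exists>s. A n s (view E1 idf s v) \<noteq> None"
  shows "halt_time A n E2 idf v = halt_time A n E1 idf v"
    and "alg_output A n E2 idf v = alg_output A n E1 idf v"
proof -
  let ?h = "halt_time A n E1 idf v"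
  have P: "A n ?h (view E1 idf ?h v) \<noteq> None"
    unfolding halt_time_def using LeastI_ex[OF ex] .
  have notP: "A n s (view E1 idf s v) = None" if "s < ?h" for s
    using not_less_Least[of s "\<lambda>t. A n t (view E1 idf t v) \<noteq> None"] that
    unfolding halt_time_def by blast
  show 1: "halt_time A n E2 idf v = ?h"
    unfolding halt_time_def[of A n E2]
  proof (rule Least_equality)
    show "A n ?h (view E2 idf ?h v) \<noteq> None" using P views[OF ht] by simp
  next
    fix s assume "A n s (view E2 idf s v) \<noteq> None"
    then show "?h \<le> s"
    proof (cases "s < ?h")
      case True
      then have "s \<le> t" using ht by simp
      then show ?thesis using notP[OF True] views \<open>A n s (view E2 idf s v) \<noteq> None\<close> by simp
    qed simp
  qed
  show "alg_output A n E2 idf v = alg_output A n E1 idf v"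
    unfolding alg_output_def 1 using views[OF ht] by simp
qed

lemma strict_vertex:
  assumes "partial_coloring k k V E \<gamma>" "v \<in> V" "finite (nbrs E v)" "deg E v \<le> k"
    "u \<in> nbrs E v"
  shows "\<gamma> u \<noteq> \<gamma> v"
proof -
  let ?N = "nbrs E v"
  have "card {u \<in> ?N. \<gamma> u \<noteq> \<gamma> v} \<ge> min k (deg E v)"
    using assms(1,2) unfolding partial_coloring_def by blast
  then have "card {u \<in> ?N. \<gamma> u \<noteq> \<gamma> v} \<ge> card ?N"
    using assms(4) unfolding deg_def by simp
  then have "{u \<in> ?N. \<gamma> u \<noteq> \<gamma> v} = ?N"
    using card_subset_eq[OF assms(3), of "{u \<in> ?N. \<gamma> u \<noteq> \<gamma> v}"]
      card_mono[OF assms(3), of "{u \<in> ?N. \<gamma> u \<noteq> \<gamma> v}"] by auto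
  then show ?thesis using assms(5) by blast
qed

lemma eq_gadget:
  assumes "finite S" "card S = k - 1"
    and distinct: "\<And>s s'. s \<in> S \<Longrightarrow> s' \<in> S \<Longrightarrow> s \<noteq> s' \<Longrightarrow> \<gamma> s \<noteq> \<gamma> s'"
    and nx: "\<And>s. s \<in> S \<Longrightarrow> \<gamma> s \<noteq> \<gamma> x" and ny: "\<And>s. s \<in> S \<Longrightarrow> \<gamma> s \<noteq> \<gamma> y"
    and cx: "\<gamma> x \<in> {1..k}" and cy: "\<gamma> y \<in> {1..k}" and cS: "\<gamma> ` S \<subseteq> {1..k}"
  shows "\<gamma> x = \<gamma> y"
proof (rule ccontr)
  assume ne: "\<gamma> x \<noteq> \<gamma> y"
  have inj: "inj_on \<gamma> S" using distinct unfolding inj_on_def by blast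
  have sub: "\<gamma> ` S \<subseteq> {1..k} - {\<gamma> x}" using cS nx by auto
  have "card ({1..k} - {\<gamma> x}) = k - 1" using cx by simp
  then have "\<gamma> ` S = {1..k} - {\<gamma> x}"
    using card_subset_eq[OF _ sub] card_image[OF inj] assms(2) by simp
  then have "\<gamma> y \<in> \<gamma> ` S" using cy ne by auto
  then obtain s where "s \<in> S" "\<gamma> y = \<gamma> s" by auto
  then show False using ny[of s] by simp
qed



definition enc :: "nat \<Rightarrow> nat \<Rightarrow> nat \<Rightarrow> nat" where "enc k i a = i * k + a"

lemma enc_div[simp]: "a < k \<Longrightarrow> enc k i a div k = i" unfolding enc_def by simp
lemma enc_mod[simp]: "a < k \<Longrightarrow> enc k i a mod k = a" unfolding enc_def by simp

lemma enc_inj[simp]: "a < k \<Longrightarrow> b < k \<Longrightarrow> enc k i a = enc k j b \<longleftrightarrow> i = j \<and> a = b"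
  by (metis enc_div enc_mod)

lemma enc_le: "i < m \<Longrightarrow> a < k \<Longrightarrow> enc k i a \<le> m * k"
proof -
  assume "i < m" "a < k"
  then have "i * k + a < Suc i * k" by simp
  also have "\<dots> \<le> m * k" using \<open>i < m\<close> by (intro mult_le_mono1) simp
  finally show ?thesis unfolding enc_def by simp
qed

lemma enc_le0: "i \<le> m \<Longrightarrow> enc k i 0 \<le> m * k" unfolding enc_def by simp

definition gadj :: "nat \<Rightarrow> nat \<Rightarrow> nat set \<Rightarrow> nat \<Rightarrow> nat \<Rightarrow> bool" where
  "gadj k m J u v \<longleftrightarrow>
    (\<exists>i a. i < m \<and> 0 < a \<and> a < k \<and> v = enc k i a \<and>
       (u = enc k i 0 \<or> (i \<notin> J \<and> u = enc k (Suc i) 0) \<or> (\<exists>b. 0 < b \<and> b < k \<and> b \<noteq> a \<and> u = enc k i b)))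
    \<or> (\<exists>i\<in>J. u = enc k i 0 \<and> v = enc k (Suc i) 0)"

definition gE :: "nat \<Rightarrow> nat \<Rightarrow> nat set \<Rightarrow> nat set set" where
  "gE k m J = {{u,v} | u v. gadj k m J u v}"

definition gV :: "nat \<Rightarrow> nat \<Rightarrow> nat set" where "gV k m = {..m*k}"

lemma mem_gE: "{u,v} \<in> gE k m J \<longleftrightarrow> gadj k m J u v \<or> gadj k m J v u"
  unfolding gE_def by (auto simp: doubleton_eq_iff)

lemma nbrs_gE: "nbrs (gE k m J) v = {u. gadj k m J u v \<or> gadj k m J v u}"
  unfolding nbrs_def using mem_gE by (auto simp: insert_commute)

lemma gE_doubleton: "e \<in> gE k m J \<Longrightarrow> \<exists>a b. e = {a,b}"
  unfolding gE_def by blast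

lemma gadj_props:
  assumes "gadj k m J u v" "J \<subseteq> {..<m}" "k \<ge> 3"
  shows "u \<noteq> v" "u \<le> m * k" "v \<le> m * k"
  using assms unfolding gadj_def
  by (auto intro!: enc_le enc_le0 simp: Suc_le_eq subset_eq)

lemma simple_gE:
  assumes "J \<subseteq> {..<m}" "k \<ge> 3"
  shows "simple_graph (gV k m) (gE k m J)"
  unfolding simple_graph_def gV_def gE_def
  using gadj_props[OF _ assms] by fastforce

lemma card_gV: "card (gV k m) = m * k + 1" unfolding gV_def by simp



lemma nbrs_gadget:
  assumes k: "k \<ge> 3" and i: "i < m" "i \<notin> J" and a: "0 < a" "a < k"
  shows "nbrs (gE k m J) (enc k i a) = (\<lambda>b. enc k i b) ` ({0<..<k} - {a}) \<union> {enc k i 0, enc k (Suc i) 0}"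
proof (rule set_eqI, rule iffI)
  have k0: "0 < k" using k by simp
  fix u assume "u \<in> nbrs (gE k m J) (enc k i a)"
  then show "u \<in> (\<lambda>b. enc k i b) ` ({0<..<k} - {a}) \<union> {enc k i 0, enc k (Suc i) 0}"
    unfolding nbrs_gE gadj_def using k0 i a by auto
next
  fix u assume u: "u \<in> (\<lambda>b. enc k i b) ` ({0<..<k} - {a}) \<union> {enc k i 0, enc k (Suc i) 0}"
  have "gadj k m J u (enc k i a)"
  proof -
    have "u = enc k i 0 \<or> (i \<notin> J \<and> u = enc k (Suc i) 0) \<or> (\<exists>b. 0 < b \<and> b < k \<and> b \<noteq> a \<and> u = enc k i b)"
      using u i by auto
    then show ?thesis unfolding gadj_def using i a by blast
  qed
  then show "u \<in> nbrs (gE k m J) (enc k i a)" unfolding nbrs_gE by blast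
qed

lemma nbrs_hub:
  assumes k: "k \<ge> 3" and j: "Suc j < m"
  shows "nbrs (gE k m {j}) (enc k (Suc j) 0) = (\<lambda>b. enc k (Suc j) b) ` {0<..<k} \<union> {enc k j 0}"
proof (rule set_eqI, rule iffI)
  have k0: "0 < k" using k by simp
  fix u assume "u \<in> nbrs (gE k m {j}) (enc k (Suc j) 0)"
  then show "u \<in> (\<lambda>b. enc k (Suc j) b) ` {0<..<k} \<union> {enc k j 0}"
    unfolding nbrs_gE gadj_def using k0 j by auto
next
  fix u assume u: "u \<in> (\<lambda>b. enc k (Suc j) b) ` {0<..<k} \<union> {enc k j 0}"
  show "u \<in> nbrs (gE k m {j}) (enc k (Suc j) 0)"
  proof (cases "u = enc k j 0")
    case True
    then have "gadj k m {j} u (enc k (Suc j) 0)" unfolding gadj_def by blast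
    then show ?thesis unfolding nbrs_gE by blast
  next
    case False
    then obtain b where b: "0 < b" "b < k" "u = enc k (Suc j) b" using u by auto
    then have "gadj k m {j} (enc k (Suc j) 0) u" unfolding gadj_def using j by blast
    then show ?thesis unfolding nbrs_gE by blast
  qed
qed



lemma card_gadget_nbrs:
  assumes k: "k \<ge> 3" and a: "0 < a" "a < k"
  shows "finite ((\<lambda>b. enc k i b) ` ({0<..<k} - {a}) \<union> {enc k i 0, enc k (Suc i) 0})"
    and "card ((\<lambda>b. enc k i b) ` ({0<..<k} - {a}) \<union> {enc k i 0, enc k (Suc i) 0}) = k"
proof -
  let ?B = "(\<lambda>b. enc k i b) ` ({0<..<k} - {a})"
  show "finite (?B \<union> {enc k i 0, enc k (Suc i) 0})" by simp
  have inj: "inj_on (\<lambda>b. enc k i b) ({0<..<k} - {a})" by (rule inj_onI) simp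
  have cB: "card ?B = k - 2" using card_image[OF inj] a by simp
  have n1: "enc k i 0 \<notin> ?B" using k by auto
  have n2: "enc k (Suc i) 0 \<notin> insert (enc k i 0) ?B" using k by auto
  have "?B \<union> {enc k i 0, enc k (Suc i) 0} = insert (enc k (Suc i) 0) (insert (enc k i 0) ?B)" by auto
  then show "card (?B \<union> {enc k i 0, enc k (Suc i) 0}) = k"
    using cB n1 n2 k by (simp add: card_insert_disjoint)
qed

lemma gV_enc: "i < m \<Longrightarrow> a < k \<Longrightarrow> enc k i a \<in> gV k m"
  unfolding gV_def using enc_le by simp

lemma gadget_eq:
  assumes pc: "partial_coloring k k (gV k m) (gE k m J) \<gamma>" and k: "k \<ge> 3"
    and i: "i < m" "i \<notin> J"
  shows "\<gamma> (enc k i 0) = \<gamma> (enc k (Suc i) 0)"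
proof -
  let ?S = "(\<lambda>b. enc k i b) ` {0<..<k}"
  have inj: "inj_on (\<lambda>b. enc k i b) {0<..<k}" by (rule inj_onI) simp
  have cS: "card ?S = k - 1" using card_image[OF inj] by simp
  have col: "\<gamma> v \<in> {1..k}" if "v \<in> gV k m" for v
    using pc that unfolding partial_coloring_def by blast
  have strict: "\<gamma> u \<noteq> \<gamma> (enc k i a)"
    if a: "0 < a" "a < k" and u: "u \<in> (\<lambda>b. enc k i b) ` ({0<..<k} - {a}) \<union> {enc k i 0, enc k (Suc i) 0}" for a u
  proof (rule strict_vertex[OF pc])
    show "enc k i a \<in> gV k m" using gV_enc i a by simp
    show "finite (nbrs (gE k m J) (enc k i a))"
      using nbrs_gadget[OF k i a] card_gadget_nbrs[OF k a] by simp
    show "deg (gE k m J) (enc k i a) \<le> k"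
      unfolding deg_def using nbrs_gadget[OF k i a] card_gadget_nbrs[OF k a] by simp
    show "u \<in> nbrs (gE k m J) (enc k i a)" using nbrs_gadget[OF k i a] u by simp
  qed
  show ?thesis
  proof (rule eq_gadget[of ?S k \<gamma>])
    show "finite ?S" by simp
    show "card ?S = k - 1" by (rule cS)
    show "\<gamma> s \<noteq> \<gamma> s'" if s1: "s \<in> ?S" and s2: "s' \<in> ?S" and s3: "s \<noteq> s'" for s s'
    proof -
      obtain a b where ab: "0 < a" "a < k" "0 < b" "b < k" "s = enc k i a" "s' = enc k i b"
        using s1 s2 by auto
      then have "a \<noteq> b" using s3 by auto
      then have "s \<in> (\<lambda>b. enc k i b) ` ({0<..<k} - {b}) \<union> {enc k i 0, enc k (Suc i) 0}"
        using ab by auto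
      then show ?thesis using strict[OF ab(3,4)] ab by simp
    qed
    show "\<gamma> s \<noteq> \<gamma> (enc k i 0)" if s1: "s \<in> ?S" for s
    proof -
      obtain a where a: "0 < a" "a < k" "s = enc k i a" using s1 by auto
      show ?thesis using strict[OF a(1,2), of "enc k i 0"] a by simp
    qed
    show "\<gamma> s \<noteq> \<gamma> (enc k (Suc i) 0)" if s1: "s \<in> ?S" for s
    proof -
      obtain a where a: "0 < a" "a < k" "s = enc k i a" using s1 by auto
      show ?thesis using strict[OF a(1,2), of "enc k (Suc i) 0"] a by simp
    qed
    show "\<gamma> (enc k i 0) \<in> {1..k}" using col gV_enc i k by simp
    show "\<gamma> (enc k (Suc i) 0) \<in> {1..k}" using col gV_def enc_le0[of "Suc i" m k] i by simp
    show "\<gamma> ` ?S \<subseteq> {1..k}" using col gV_enc i by auto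
  qed
qed

lemma hub_neq:
  assumes pc: "partial_coloring k k (gV k m) (gE k m {j}) \<gamma>" and k: "k \<ge> 3"
    and j: "Suc j < m"
  shows "\<gamma> (enc k j 0) \<noteq> \<gamma> (enc k (Suc j) 0)"
proof (rule strict_vertex[OF pc])
  let ?B = "(\<lambda>b. enc k (Suc j) b) ` {0<..<k}"
  have inj: "inj_on (\<lambda>b. enc k (Suc j) b) {0<..<k}" by (rule inj_onI) simp
  have cB: "card ?B = k - 1" using card_image[OF inj] by simp
  have n: "enc k j 0 \<notin> ?B" using k by auto
  have c: "card (?B \<union> {enc k j 0}) = k" using cB n k by simp
  show "enc k (Suc j) 0 \<in> gV k m" using gV_enc j k by simp
  show "finite (nbrs (gE k m {j}) (enc k (Suc j) 0))" using nbrs_hub[OF k j] by simp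
  show "deg (gE k m {j}) (enc k (Suc j) 0) \<le> k" unfolding deg_def using nbrs_hub[OF k j] c by simp
  show "enc k j 0 \<in> nbrs (gE k m {j}) (enc k (Suc j) 0)" using nbrs_hub[OF k j] by simp
qed

lemma chain:
  assumes step: "\<And>i. lo \<le> i \<Longrightarrow> i < hi \<Longrightarrow> g i = g (Suc i)"
  shows "lo \<le> i \<Longrightarrow> i \<le> hi \<Longrightarrow> g i = g lo"
proof (induction i)
  case 0 then show ?case by simp
next
  case (Suc i)
  show ?case
  proof (cases "lo = Suc i")
    case False
    then have "lo \<le> i" using Suc.prems by simp
    then show ?thesis using Suc step[of i] by simp
  qed simp
qed



lemma proper_pc:
  assumes "\<And>v. v \<in> V \<Longrightarrow> \<gamma> v \<in> {1..c}" "\<And>v u. v \<in> V \<Longrightarrow> u \<in> nbrs E v \<Longrightarrow> \<gamma> u \<noteq> \<gamma> v"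
  shows "partially_colorable k c V E"
proof -
  have "\<forall>v\<in>V. {u \<in> nbrs E v. \<gamma> u \<noteq> \<gamma> v} = nbrs E v" using assms(2) by blast
  then have "partial_coloring k c V E \<gamma>" unfolding partial_coloring_def deg_def using assms(1) by simp
  then show ?thesis unfolding partially_colorable_def by blast
qed

definition col1 :: "nat \<Rightarrow> nat \<Rightarrow> nat" where
  "col1 k v = (if v mod k = 0 then 1 else v mod k + 1)"

definition col2 :: "nat \<Rightarrow> nat \<Rightarrow> nat \<Rightarrow> nat" where
  "col2 k j v = (if v mod k = 0 then (if v div k \<le> j then 1 else 2)
     else if v div k \<le> j then v mod k + 1 else (if v mod k = 1 then 1 else v mod k + 1))"

lemma col1_proper: "k \<ge> 3 \<Longrightarrow> gadj k m {} u v \<Longrightarrow> col1 k u \<noteq> col1 k v"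
  unfolding gadj_def col1_def by auto

lemma col2_proper: "k \<ge> 3 \<Longrightarrow> gadj k m {j} u v \<Longrightarrow> col2 k j u \<noteq> col2 k j v"
  unfolding gadj_def col2_def by auto

lemma col1_range: "k \<ge> 3 \<Longrightarrow> col1 k v \<in> {1..k}"
proof -
  assume k: "k \<ge> 3"
  then have "v mod k < k" by simp
  then show ?thesis unfolding col1_def using k by (auto simp: Suc_le_eq)
qed

lemma col2_range: "k \<ge> 3 \<Longrightarrow> col2 k j v \<in> {1..k}"
proof -
  assume k: "k \<ge> 3"
  then have "v mod k < k" by simp
  then show ?thesis unfolding col2_def using k by (auto simp: Suc_le_eq)
qed

lemma pc1: "k \<ge> 3 \<Longrightarrow> partially_colorable k k (gV k m) (gE k m {})"
  by (rule proper_pc[of _ "col1 k"]) (use col1_range in blast, auto simp: nbrs_gE dest: col1_proper)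

lemma pc2: "k \<ge> 3 \<Longrightarrow> partially_colorable k k (gV k m) (gE k m {j})"
  by (rule proper_pc[of _ "col2 k j"]) (use col2_range in blast, auto simp: nbrs_gE dest: col2_proper)

lemma gadj_pot: "k \<ge> 3 \<Longrightarrow> gadj k m J u v \<Longrightarrow> u div k \<le> v div k + 1 \<and> v div k \<le> u div k + 1"
  unfolding gadj_def by auto

lemma gE_pot: "k \<ge> 3 \<Longrightarrow> {u,v} \<in> gE k m J \<Longrightarrow> u div k \<le> v div k + 1 \<and> v div k \<le> u div k + 1"
  using gadj_pot mem_gE by blast

lemma ball_pot:
  assumes "\<And>u v. {u,v} \<in> E \<Longrightarrow> \<psi> v \<le> \<psi> u + 1"
  shows "w \<in> ball E v t \<Longrightarrow> \<psi> w \<le> \<psi> v + t \<and> \<psi> v \<le> \<psi> w + t"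
proof (induction t arbitrary: w)
  case 0 then show ?case by simp
next
  case (Suc t)
  show ?case
  proof (cases "w \<in> ball E v t")
    case True then show ?thesis using Suc.IH by fastforce
  next
    case False
    then obtain x where x: "x \<in> ball E v t" "{x, w} \<in> E" using Suc.prems by auto
    have "\<psi> w \<le> \<psi> x + 1" using assms x(2) by blast
    moreover have "\<psi> x \<le> \<psi> w + 1" using assms[of w x] x(2) by (simp add: insert_commute)
    ultimately show ?thesis using Suc.IH[OF x(1)] by simp
  qed
qed

lemma gadj_agree:
  assumes k: "k \<ge> 3" and h: "x div k \<notin> {j, Suc j} \<or> y div k \<notin> {j, Suc j}"
  shows "gadj k m {} x y \<longleftrightarrow> gadj k m {j} x y"
proof
  assume "gadj k m {} x y"
  then obtain i a where ia: "i < m" "0 < a" "a < k" "y = enc k i a"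
    and d: "x = enc k i 0 \<or> x = enc k (Suc i) 0 \<or> (\<exists>b. 0 < b \<and> b < k \<and> b \<noteq> a \<and> x = enc k i b)"
    unfolding gadj_def by blast
  show "gadj k m {j} x y"
  proof (cases "x = enc k (Suc i) 0")
    case True
    then have "i \<noteq> j" using h ia k by auto
    then show ?thesis unfolding gadj_def using ia True by blast
  next
    case False
    then show ?thesis unfolding gadj_def using ia d by blast
  qed
next
  assume "gadj k m {j} x y"
  then have "(\<exists>i a. i < m \<and> 0 < a \<and> a < k \<and> y = enc k i a \<and>
       (x = enc k i 0 \<or> (i \<notin> {j} \<and> x = enc k (Suc i) 0) \<or> (\<exists>b. 0 < b \<and> b < k \<and> b \<noteq> a \<and> x = enc k i b)))
    \<or> (x = enc k j 0 \<and> y = enc k (Suc j) 0)" unfolding gadj_def by blast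
  then show "gadj k m {} x y"
  proof
    assume "x = enc k j 0 \<and> y = enc k (Suc j) 0"
    then have False using h k by auto
    then show ?thesis ..
  next
    assume "\<exists>i a. i < m \<and> 0 < a \<and> a < k \<and> y = enc k i a \<and>
       (x = enc k i 0 \<or> (i \<notin> {j} \<and> x = enc k (Suc i) 0) \<or> (\<exists>b. 0 < b \<and> b < k \<and> b \<noteq> a \<and> x = enc k i b))"
    then show ?thesis unfolding gadj_def by blast
  qed
qed

lemma gE_agree:
  assumes "k \<ge> 3" "u div k \<notin> {j, Suc j}"
  shows "{u,w} \<in> gE k m {} \<longleftrightarrow> {u,w} \<in> gE k m {j}"
  unfolding mem_gE using gadj_agree[OF assms(1)] assms(2) by blast



lemma lower_bound:
  assumes d: "d \<ge> 1" and k: "k \<ge> 3" and sol: "solves d k A"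
  shows "Suc t \<le> T d k A ((2*t+3)*k + 1)"
proof (rule ccontr)
  assume contra: "\<not> Suc t \<le> T d k A ((2*t+3)*k + 1)"
  define m where "m = 2*t+3"
  define j where "j = Suc t"
  define n where "n = m*k+1"
  define V where "V = gV k m"
  define E1 where "E1 = gE k m {}"
  define E2 where "E2 = gE k m {j}"
  have k0: "0 < k" using k by simp
  have jm: "Suc j < m" unfolding j_def m_def by simp
  have s1: "simple_graph V E1" unfolding V_def E1_def using simple_gE[OF _ k] by simp
  have s2: "simple_graph V E2" unfolding V_def E2_def using simple_gE[OF _ k] jm by simp
  have cV: "card V = n" unfolding V_def n_def by (simp add: card_gV)
  have fV: "finite V" unfolding V_def gV_def by simp
  have vid: "valid_ids n d V Suc"
  proof -
    have "n \<le> n ^ d" using d by (intro self_le_power) (auto simp: n_def)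
    then show ?thesis unfolding valid_ids_def V_def gV_def n_def by auto
  qed
  have p1: "partially_colorable k k V E1" unfolding V_def E1_def by (rule pc1[OF k])
  have p2: "partially_colorable k k V E2" unfolding V_def E2_def by (rule pc2[OF k])
  have Tn: "T d k A n \<le> t" using contra unfolding n_def m_def by simp
  have r1: "rounds A V E1 Suc \<le> t" using T_ge[OF s1 cV vid p1, of A] Tn by simp
  have r2: "rounds A V E2 Suc \<le> t" using T_ge[OF s2 cV vid p2, of A] Tn by simp
  have sol1: "(\<forall>v\<in>V. \<exists>s. A n s (view E1 Suc s v) \<noteq> None) \<and> partial_coloring k k V E1 (alg_output A n E1 Suc)"
    using sol s1 vid p1 cV unfolding solves_def by metis
  have sol2: "(\<forall>v\<in>V. \<exists>s. A n s (view E2 Suc s v) \<noteq> None) \<and> partial_coloring k k V E2 (alg_output A n E2 Suc)"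
    using sol s2 vid p2 cV unfolding solves_def by metis
  define x0 where "x0 = enc k 0 0"
  define xm where "xm = enc k m 0"
  have x0V: "x0 \<in> V" unfolding x0_def V_def using gV_enc[of 0 m 0 k] k0 m_def by simp
  have xmV: "xm \<in> V" unfolding xm_def V_def gV_def using enc_le0[of m m k] by simp
  have ht: "halt_time A n E1 Suc v \<le> t" if "v \<in> V" for v
  proof -
    have "halt_time A n E1 Suc v \<le> rounds A V E1 Suc"
      unfolding rounds_def cV using fV that by simp
    then show ?thesis using r1 by simp
  qed
  have pot: "\<And>u v. {u,v} \<in> E1 \<Longrightarrow> v div k \<le> u div k + 1"
    unfolding E1_def using gE_pot[OF k] by blast
  have dE1: "\<And>e. e \<in> E1 \<Longrightarrow> \<exists>a b. e = {a,b}" unfolding E1_def by (rule gE_doubleton)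
  have dE2: "\<And>e. e \<in> E2 \<Longrightarrow> \<exists>a b. e = {a,b}" unfolding E2_def by (rule gE_doubleton)
  have agreeL: "\<And>u w. u \<in> {w. w div k < j} \<Longrightarrow> ({u,w} \<in> E1 \<longleftrightarrow> {u,w} \<in> E2)"
    unfolding E1_def E2_def using gE_agree[OF k] by simp
  have subL: "ball E1 x0 t \<subseteq> {w. w div k < j}"
  proof
    fix w assume "w \<in> ball E1 x0 t"
    then have "w div k \<le> x0 div k + t" using ball_pot[of E1 "\<lambda>w. w div k", OF pot] by blast
    then show "w \<in> {w. w div k < j}" unfolding x0_def j_def using k0 by simp
  qed
  have agreeR: "\<And>u w. u \<in> {w. Suc j < w div k} \<Longrightarrow> ({u,w} \<in> E1 \<longleftrightarrow> {u,w} \<in> E2)"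
    unfolding E1_def E2_def using gE_agree[OF k] by simp
  have subR: "ball E1 xm t \<subseteq> {w. Suc j < w div k}"
  proof
    fix w assume "w \<in> ball E1 xm t"
    then have "xm div k \<le> w div k + t" using ball_pot[of E1 "\<lambda>w. w div k", OF pot] by blast
    then show "w \<in> {w. Suc j < w div k}" unfolding xm_def j_def m_def using k0 by simp
  qed
  have o0: "alg_output A n E2 Suc x0 = alg_output A n E1 Suc x0"
    by (rule halt_agree(2)[OF view_agree[OF agreeL subL _ dE1 dE2] ht[OF x0V]]) (use sol1 x0V in auto)
  have om: "alg_output A n E2 Suc xm = alg_output A n E1 Suc xm"
    by (rule halt_agree(2)[OF view_agree[OF agreeR subR _ dE1 dE2] ht[OF xmV]]) (use sol1 xmV in auto)
  let ?g1 = "alg_output A n E1 Suc"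
  let ?g2 = "alg_output A n E2 Suc"
  have pc1': "partial_coloring k k (gV k m) (gE k m {}) ?g1" using sol1 unfolding V_def E1_def by simp
  have pc2': "partial_coloring k k (gV k m) (gE k m {j}) ?g2" using sol2 unfolding V_def E2_def by simp
  have e1: "?g1 xm = ?g1 x0"
    unfolding xm_def x0_def
    by (rule chain[of 0 m "\<lambda>i. ?g1 (enc k i 0)"]) (use gadget_eq[OF pc1' k] in auto)
  have e2a: "?g2 (enc k j 0) = ?g2 x0"
    unfolding x0_def
    by (rule chain[of 0 j "\<lambda>i. ?g2 (enc k i 0)"]) (use gadget_eq[OF pc2' k] jm in auto)
  have e2b: "?g2 xm = ?g2 (enc k (Suc j) 0)"
    unfolding xm_def
    by (rule chain[of "Suc j" m "\<lambda>i. ?g2 (enc k i 0)"]) (use gadget_eq[OF pc2' k] jm in auto)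
  have ne: "?g2 (enc k j 0) \<noteq> ?g2 (enc k (Suc j) 0)" by (rule hub_neq[OF pc2' k jm])
  show False using e1 e2a e2b ne o0 om by simp
qed



theorem theorem2:
  fixes d k :: nat and A :: algorithm
  assumes "d \<ge> 1" and "k \<ge> 3" and "solves d k A"
  shows "(\<lambda>n. real (T d k A n)) \<notin> o(\<lambda>n. real n / real k ^ 3)"
proof
  assume o: "(\<lambda>n. real (T d k A n)) \<in> o(\<lambda>n. real n / real k ^ 3)"
  have kpos: "(0::real) < real k" using assms(2) by simp
  have c: "(0::real) < real k ^ 2 / 8" using kpos by simp
  have "eventually (\<lambda>n. norm (real (T d k A n)) \<le> real k ^ 2 / 8 * norm (real n / real k ^ 3)) at_top"
    by (rule landau_o.smallD[OF o c])
  then obtain N where N: "\<And>n. n \<ge> N \<Longrightarrow> norm (real (T d k A n)) \<le> real k ^ 2 / 8 * norm (real n / real k ^ 3)"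
    unfolding eventually_at_top_linorder by blast
  define n where "n = (2*N+3)*k + 1"
  have "(2*N+3)*1 \<le> (2*N+3)*k" using assms(2) by (intro mult_le_mono2) simp
  then have "N \<le> (2*N+3)*k" by (rule le_trans[rotated]) simp
  then have "n \<ge> N" unfolding n_def by simp
  then have h: "real (T d k A n) \<le> real k ^ 2 / 8 * (real n / real k ^ 3)" using N[of n] by simp
  have lb: "real (Suc N) \<le> real (T d k A n)" using lower_bound[OF assms, of N] unfolding n_def by simp
  have "real k ^ 2 / 8 * (real n / real k ^ 3) = real n / (8 * real k)"
    using kpos by (simp add: field_simps power2_eq_square power3_eq_cube)
  also have "\<dots> \<le> (2 * real N + 4) * real k / (8 * real k)"
  proof -
    have "real n \<le> (2 * real N + 4) * real k" unfolding n_def using assms(2) by (simp add: algebra_simps)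
    then show ?thesis using kpos by (intro divide_right_mono) simp_all
  qed
  also have "\<dots> = (real N + 2) / 4" using kpos by (simp add: field_simps)
  finally have "real (Suc N) \<le> (real N + 2) / 4" using h lb by linarith
  then show False by simp
qed

end
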